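(* Let $(p_0,\dots,p_{n-1})$ be a closed discrete curve with $l_k=l_0$ and $\theta_k=\theta_0\in(-\pi,\pi)$ for all $k$, and let $\kappa=2\tan(\theta_0/2)/l_0$ (so the curve is an equilibrium of $L+\kappa\mathrm{Vol}$). Let $p(t)$, $t\in(-\varepsilon,\varepsilon)$, be a $C^2$ family of closed discrete curves with $p(0)=p$, $\mathrm{Vol}(p(t))$ constant, and $p_k'(0)=\psi_kN_k+\eta_kT_k$ for real $\psi_k,\eta_k$. Then \[ \frac{d^2}{dt^2}\Big|_{t=0}L(p(t))=\sum_k\Big[|\nabla\psi_k|^2-\kappa^2\psi_k\psi_{k+1}+\tan^2\frac{\theta_0}{2}\Big(\kappa\,\nabla\psi_k(\eta_{k+1}+\eta_k)+|\nabla\eta_k|^2\Big)\Big]l_0 . \] In particular, if $\eta_k=0$ for all $k$ (normal variation), then \[ \frac{d^2}{dt^2}\Big|_{t=0}L(p(t))=\sum_k\big(|\nabla\psi_k|^2-\kappa^2\psi_k\psi_{k+1}\big)l_0=-\sum_k\psi_k\big(\Delta\psi_k+\kappa^2\psi_{k+1}\big)l_0 . \]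
   Context: A closed discrete curve is an $n$-tuple $(p_0,\dots,p_{n-1})$ of points of $\mathbb{R}^2$ ($n\ge3$), indices modulo $n$, with $l_k:=|p_{k+1}-p_k|\ne0$ for all $k$. $R_\varphi$ denotes rotation of $\mathbb{R}^2$ by $\varphi$. Fix $R\in\{R_{\pi/2},R_{-\pi/2}\}$ and set $\sigma=+1$ if $R=R_{\pi/2}$, $\sigma=-1$ if $R=R_{-\pi/2}$. Edge normal $\nu_k:=R((p_{k+1}-p_k)/l_k)$. The signed angle $\theta_k\in(-\pi,\pi]$ at vertex $p_k$ is defined by $\nu_k=R_{\sigma\theta_k}\nu_{k-1}$. When $\theta_k\ne\pi$, the vertex normal is $N_k:=\dfrac{\nu_k+\nu_{k-1}}{1+\cos\theta_k}$ and the vertex tangent is $T_k:=-RN_k$. Length $L=\sum_k l_k$, area $\mathrm{Vol}=\frac12\sum_k\langle p_k,\nu_k\rangle l_k$. Discrete gradient $\nabla\psi_k:=(\psi_{k+1}-\psi_k)/l_0$ and discrete Laplacian $\Delta\psi_k:=(\nabla\psi_k-\nabla\psi_{k-1})/l_0=(\psi_{k+1}-2\psi_k+\psi_{k-1})/l_0^2$. *)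

theory Defs
  imports "HOL-Analysis.Analysis"
begin

(* Points of R^2 are real^2; a closed discrete curve with n points is p :: nat => real^2,
   only the values p 0 .. p (n-1) matter; all indices are read modulo n. *)

definition rot :: "real \<Rightarrow> real^2 \<Rightarrow> real^2" where
  "rot \<phi> v = (\<chi> i. if i = 1 then cos \<phi> * v$1 - sin \<phi> * v$2 else sin \<phi> * v$1 + cos \<phi> * v$2)"

definition prev_idx :: "nat \<Rightarrow> nat \<Rightarrow> nat" where
  "prev_idx n k = (k + n - 1) mod n"

definition edge_len :: "(nat \<Rightarrow> real^2) \<Rightarrow> nat \<Rightarrow> nat \<Rightarrow> real" where
  "edge_len p n k = norm (p (Suc k mod n) - p (k mod n))"

definition closed_curve :: "nat \<Rightarrow> (nat \<Rightarrow> real^2) \<Rightarrow> bool" where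
  "closed_curve n p \<longleftrightarrow> n \<ge> 3 \<and> (\<forall>k<n. edge_len p n k \<noteq> 0)"

definition edge_normal :: "real \<Rightarrow> (nat \<Rightarrow> real^2) \<Rightarrow> nat \<Rightarrow> nat \<Rightarrow> real^2" where
  "edge_normal \<sigma> p n k = rot (\<sigma> * pi / 2) ((1 / edge_len p n k) *\<^sub>R (p (Suc k mod n) - p (k mod n)))"

definition signed_angle :: "real \<Rightarrow> (nat \<Rightarrow> real^2) \<Rightarrow> nat \<Rightarrow> nat \<Rightarrow> real" where
  "signed_angle \<sigma> p n k = (THE \<theta>. -pi < \<theta> \<and> \<theta> \<le> pi \<and>
      edge_normal \<sigma> p n (k mod n) = rot (\<sigma> * \<theta>) (edge_normal \<sigma> p n (prev_idx n k)))"

definition vertex_normal :: "real \<Rightarrow> (nat \<Rightarrow> real^2) \<Rightarrow> nat \<Rightarrow> nat \<Rightarrow> real^2" where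
  "vertex_normal \<sigma> p n k = (1 / (1 + cos (signed_angle \<sigma> p n k))) *\<^sub>R
      (edge_normal \<sigma> p n (k mod n) + edge_normal \<sigma> p n (prev_idx n k))"

definition vertex_tangent :: "real \<Rightarrow> (nat \<Rightarrow> real^2) \<Rightarrow> nat \<Rightarrow> nat \<Rightarrow> real^2" where
  "vertex_tangent \<sigma> p n k = - rot (\<sigma> * pi / 2) (vertex_normal \<sigma> p n k)"

definition curve_length :: "nat \<Rightarrow> (nat \<Rightarrow> real^2) \<Rightarrow> real" where
  "curve_length n p = (\<Sum>k<n. edge_len p n k)"

definition curve_vol :: "real \<Rightarrow> nat \<Rightarrow> (nat \<Rightarrow> real^2) \<Rightarrow> real" where
  "curve_vol \<sigma> n p = (1/2) * (\<Sum>k<n. (p k \<bullet> edge_normal \<sigma> p n k) * edge_len p n k)"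

definition dgrad :: "real \<Rightarrow> nat \<Rightarrow> (nat \<Rightarrow> real) \<Rightarrow> nat \<Rightarrow> real" where
  "dgrad l0 n \<psi> k = (\<psi> (Suc k mod n) - \<psi> (k mod n)) / l0"

definition dlap :: "real \<Rightarrow> nat \<Rightarrow> (nat \<Rightarrow> real) \<Rightarrow> nat \<Rightarrow> real" where
  "dlap l0 n \<psi> k = (dgrad l0 n \<psi> k - dgrad l0 n \<psi> (prev_idx n k)) / l0"

definition C2_family :: "real \<Rightarrow> nat \<Rightarrow> (real \<Rightarrow> nat \<Rightarrow> real^2) \<Rightarrow> bool" where
  "C2_family \<epsilon> n P \<longleftrightarrow> (\<forall>k<n. \<exists>D1 D2. \<forall>t\<in>{-\<epsilon><..<\<epsilon>}.
      ((\<lambda>s. P s k) has_vector_derivative D1 t) (at t) \<and>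
      (D1 has_vector_derivative D2 t) (at t) \<and> continuous_on {-\<epsilon><..<\<epsilon>} D2)"

end

theory Submission
  imports Defs
begin


lemma vd_inner:
  assumes "(f has_vector_derivative f') (at t)" "(g has_vector_derivative g') (at t)"
  shows "((\<lambda>t. f t \<bullet> g t) has_real_derivative (f' \<bullet> g t + f t \<bullet> g')) (at t)"
proof -
  have "((\<lambda>t. f t \<bullet> g t) has_derivative (\<lambda>h. f t \<bullet> (h *\<^sub>R g') + (h *\<^sub>R f') \<bullet> g t)) (at t)"
    using has_derivative_inner[OF assms(1)[unfolded has_vector_derivative_def] assms(2)[unfolded has_vector_derivative_def]]
    by (simp add: add.commute)
  then show ?thesis unfolding has_field_derivative_def
    by (rule has_derivative_eq_rhs) (auto simp: fun_eq_iff algebra_simps)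
qed

lemma vd_norm:
  assumes "(f has_vector_derivative f') (at t)" "f t \<noteq> 0"
  shows "((\<lambda>t. norm (f t)) has_real_derivative (f t \<bullet> f') / norm (f t)) (at t)"
proof -
  have 1: "((\<lambda>t. f t \<bullet> f t) has_real_derivative (f' \<bullet> f t + f t \<bullet> f')) (at t)"
    by (rule vd_inner[OF assms(1) assms(1)])
  have 2: "0 < f t \<bullet> f t" using assms(2) by simp
  have "((\<lambda>t. sqrt (f t \<bullet> f t)) has_real_derivative inverse (sqrt (f t \<bullet> f t)) / 2 * (f' \<bullet> f t + f t \<bullet> f')) (at t)"
    by (rule DERIV_chain2[OF DERIV_real_sqrt[OF 2] 1])
  moreover have "inverse (sqrt (f t \<bullet> f t)) / 2 * (f' \<bullet> f t + f t \<bullet> f') = (f t \<bullet> f') / norm (f t)"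
    by (simp add: norm_eq_sqrt_inner inner_commute field_simps)
  ultimately show ?thesis by (simp add: norm_eq_sqrt_inner)
qed

lemma rotR: assumes "\<sigma> = 1 \<or> \<sigma> = -1"
  shows "rot (\<sigma> * pi / 2) v = (\<chi> i. if i = 1 then - \<sigma> * v$2 else \<sigma> * v$1)"
  using assms by (auto simp: rot_def)



lemma inner2: "(a::real^2) \<bullet> b = a$1*b$1 + a$2*b$2"
  by (simp add: inner_vec_def sum_2)

lemma vec2_eq: "(a::real^2) = b \<longleftrightarrow> a$1 = b$1 \<and> a$2 = b$2"
  by (simp add: vec_eq_iff forall_2)

lemma rot_comp: "rot \<phi> v $ 1 = cos \<phi> * v$1 - sin \<phi> * v$2" "rot \<phi> v $ 2 = sin \<phi> * v$1 + cos \<phi> * v$2"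
  by (simp_all add: rot_def)

lemma rot_cos_sin:
  assumes "a \<bullet> a = 1" "b = rot \<phi> a"
  shows "cos \<phi> = a \<bullet> b" "sin \<phi> = a$1*b$2 - a$2*b$1"
proof -
  have h: "a$1^2 + a$2^2 = 1" using assms(1) by (simp add: inner2 power2_eq_square)
  show "cos \<phi> = a \<bullet> b" using h unfolding assms(2) inner2 rot_comp
    by (simp add: algebra_simps power2_eq_square) (metis distrib_left mult.right_neutral)
  show "sin \<phi> = a$1*b$2 - a$2*b$1" using h unfolding assms(2) inner2 rot_comp
    by (simp add: algebra_simps power2_eq_square) (metis distrib_left mult.right_neutral)
qed

lemma angle_unique:
  fixes a b :: "real^2"
  assumes s: "\<sigma> = 1 \<or> \<sigma> = -1" and a: "a \<bullet> a = 1" and b: "b \<bullet> b = 1"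
  shows "\<exists>!\<theta>. -pi < \<theta> \<and> \<theta> \<le> pi \<and> b = rot (\<sigma> * \<theta>) a"
proof -
  define c where "c = a \<bullet> b"
  define s where "s = \<sigma> * (a$1*b$2 - a$2*b$1)"
  have ha: "a$1^2 + a$2^2 = 1" using a by (simp add: inner2 power2_eq_square)
  have hb: "b$1^2 + b$2^2 = 1" using b by (simp add: inner2 power2_eq_square)
  have ss: "\<sigma>^2 = 1" using s by auto
  have cs: "c^2 + s^2 = 1"
  proof -
    have "c^2 + s^2 = (a$1^2 + a$2^2) * (b$1^2 + b$2^2)"
      unfolding c_def s_def inner2 using s by (auto simp: power2_eq_square algebra_simps)
    then show ?thesis using ha hb by simp
  qed
  define z where "z = Complex c s"
  have nz: "cmod z = 1" unfolding z_def cmod_def using cs by simp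
  hence z0: "z \<noteq> 0" by auto
  define \<theta> where "\<theta> = Arg z"
  have "cis \<theta> = z" unfolding \<theta>_def using cis_Arg[OF z0] nz by (simp add: sgn_div_norm)
  hence ct: "cos \<theta> = c" and st: "sin \<theta> = s" unfolding z_def by (auto simp: complex_eq_iff)
  have csig: "cos (\<sigma> * \<theta>) = c" "sin (\<sigma> * \<theta>) = \<sigma> * s" using s ct st by auto
  have sc: "\<sigma> * s = a$1*b$2 - a$2*b$1" unfolding s_def using ss by (simp add: power2_eq_square)
  have e1: "(a$1*b$1+a$2*b$2)*a$1 - (a$1*b$2-a$2*b$1)*a$2 = b$1 * (a$1^2 + a$2^2)"
    by (simp add: power2_eq_square algebra_simps)
  have e2: "(a$1*b$2-a$2*b$1)*a$1 + (a$1*b$1+a$2*b$2)*a$2 = b$2 * (a$1^2 + a$2^2)"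
    by (simp add: power2_eq_square algebra_simps)
  have ex: "b = rot (\<sigma> * \<theta>) a"
    unfolding vec2_eq rot_comp csig sc c_def inner2 using e1 e2 ha by simp
  show ?thesis
  proof (rule ex1I[of _ \<theta>])
    show "-pi < \<theta> \<and> \<theta> \<le> pi \<and> b = rot (\<sigma> * \<theta>) a"
      using ex mpi_less_Arg Arg_le_pi \<theta>_def by auto
  next
    fix t assume t: "-pi < t \<and> t \<le> pi \<and> b = rot (\<sigma> * t) a"
    have "cos (\<sigma>*t) = c" "sin (\<sigma>*t) = a$1*b$2 - a$2*b$1"
      using rot_cos_sin[OF a] t c_def by auto
    hence "cos t = c" "sin t = s" using s s_def by auto
    hence "cis t = z" unfolding z_def by (simp add: complex_eq_iff)
    hence "Arg z = t" using Arg_cis t by force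
    thus "t = \<theta>" using \<theta>_def by simp
  qed
qed



lemma rot_add: "rot \<phi> (a + b) = rot \<phi> a + rot \<phi> b"
  by (simp add: vec2_eq rot_comp algebra_simps)
lemma rot_diff: "rot \<phi> (a - b) = rot \<phi> a - rot \<phi> b"
  by (simp add: vec2_eq rot_comp algebra_simps)
lemma rot_minus: "rot \<phi> (- a) = - rot \<phi> a"
  by (simp add: vec2_eq rot_comp algebra_simps)
lemma rot_scaleR: "rot \<phi> (c *\<^sub>R a) = c *\<^sub>R rot \<phi> a"
  by (simp add: vec2_eq rot_comp algebra_simps)
lemma linear_rot: "linear (rot \<phi>)"
  by (rule linearI) (simp_all add: rot_add rot_scaleR)
lemma bounded_linear_rot: "bounded_linear (rot \<phi>)"
  using linear_rot linear_conv_bounded_linear by blast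

lemma vd_rot: "(f has_vector_derivative f') F \<Longrightarrow> ((\<lambda>t. rot \<phi> (f t)) has_vector_derivative rot \<phi> f') F"
  by (rule bounded_linear.has_vector_derivative[OF bounded_linear_rot])

lemma R_comp: assumes "\<sigma> = 1 \<or> \<sigma> = -1"
  shows "rot (\<sigma> * pi / 2) v $ 1 = - \<sigma> * v$2" "rot (\<sigma> * pi / 2) v $ 2 = \<sigma> * v$1"
  using assms by (auto simp: rot_comp)

lemma RR: assumes "\<sigma> = 1 \<or> \<sigma> = -1"
  shows "rot (\<sigma> * pi / 2) (rot (\<sigma> * pi / 2) v) = - v"
  unfolding vec2_eq R_comp[OF assms] using assms by auto

lemma inner_R_self: assumes "\<sigma> = 1 \<or> \<sigma> = -1"
  shows "x \<bullet> rot (\<sigma> * pi / 2) x = 0" "rot (\<sigma> * pi / 2) x \<bullet> x = 0"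
  unfolding inner2 R_comp[OF assms] using assms by (auto simp: algebra_simps)

lemma inner_RR: assumes "\<sigma> = 1 \<or> \<sigma> = -1"
  shows "rot (\<sigma> * pi / 2) x \<bullet> rot (\<sigma> * pi / 2) y = x \<bullet> y"
  unfolding inner2 R_comp[OF assms] using assms by (auto simp: algebra_simps)

lemma inner_R_swap: assumes "\<sigma> = 1 \<or> \<sigma> = -1"
  shows "x \<bullet> rot (\<sigma> * pi / 2) y = - (rot (\<sigma> * pi / 2) x \<bullet> y)"
  unfolding inner2 R_comp[OF assms] using assms by (auto simp: algebra_simps)

lemma rot_back: assumes s: "\<sigma> = 1 \<or> \<sigma> = -1" and b: "b = rot (\<sigma> * \<theta>) a"
  shows "a = cos \<theta> *\<^sub>R b - sin \<theta> *\<^sub>R rot (\<sigma> * pi / 2) b"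
proof -
  have ss: "\<sigma> * \<sigma> = 1" using s by auto
  have cs: "cos (\<sigma> * \<theta>) = cos \<theta>" "sin (\<sigma> * \<theta>) = \<sigma> * sin \<theta>" using s by auto
  have b1: "b$1 = cos \<theta> * a$1 - \<sigma> * sin \<theta> * a$2" and b2: "b$2 = \<sigma> * sin \<theta> * a$1 + cos \<theta> * a$2"
    using b cs by (simp_all add: rot_comp)
  have sc: "(cos \<theta>)^2 + (sin \<theta>)^2 = 1" by simp
  have e1: "cos \<theta> * b$1 + \<sigma> * sin \<theta> * b$2 = a$1 * ((cos \<theta>)^2 + (\<sigma>*\<sigma>) * (sin \<theta>)^2)"
    unfolding b1 b2 by (simp add: algebra_simps power2_eq_square)
  have e2: "cos \<theta> * b$2 - \<sigma> * sin \<theta> * b$1 = a$2 * ((cos \<theta>)^2 + (\<sigma>*\<sigma>) * (sin \<theta>)^2)"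
    unfolding b1 b2 by (simp add: algebra_simps power2_eq_square)
  have "a$1 = cos \<theta> * b$1 + \<sigma> * sin \<theta> * b$2" "a$2 = cos \<theta> * b$2 - \<sigma> * sin \<theta> * b$1"
    using e1 e2 sc ss by simp_all
  then show ?thesis unfolding vec2_eq by (simp add: R_comp[OF s])
qed



lemma idx_facts:
  assumes "k < n"
  shows "Suc k mod n < n" "prev_idx n k < n" "prev_idx n (Suc k mod n) = k" "Suc (prev_idx n k) mod n = k"
proof -
  show "Suc k mod n < n" using assms by simp
  show "prev_idx n k < n" using assms by (simp add: prev_idx_def)
  show "prev_idx n (Suc k mod n) = k"
  proof (cases "Suc k < n")
    case True
    have "Suc k mod n + n - 1 = k + n" using True by simp
    thus ?thesis unfolding prev_idx_def using assms by simp
  next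
    case False hence "Suc k = n" using assms by simp
    hence "Suc k mod n + n - 1 = k" by simp
    thus ?thesis unfolding prev_idx_def using assms by simp
  qed
  show "Suc (prev_idx n k) mod n = k"
  proof (cases "k = 0")
    case True
    have n0: "0 < n" using assms by simp
    have "prev_idx n k = n - 1" unfolding prev_idx_def using True n0 by simp
    thus ?thesis using True n0 by simp
  next
    case False
    have e: "k + n - 1 = (k - 1) + n" using False by simp
    have "prev_idx n k = ((k - 1) + n) mod n" unfolding prev_idx_def e ..
    also have "\<dots> = k - 1" using assms by simp
    finally show ?thesis using assms False by simp
  qed
qed

lemma tan_half': "tan (x/2) = sin x / (1 + cos x)"
  using tan_half[of "x/2"] by (simp add: add.commute)

lemma polygon_geom:
  assumes s: "\<sigma> = 1 \<or> \<sigma> = -1" and cc: "closed_curve n p"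
    and el: "\<forall>k<n. edge_len p n k = l0"
    and sa: "\<forall>k<n. signed_angle \<sigma> p n k = \<theta>0"
    and th: "-pi < \<theta>0" "\<theta>0 < pi" and k: "k < n"
    and u_def: "u = (\<lambda>j. (1/l0) *\<^sub>R (p (Suc j mod n) - p j))"
  shows "u k \<bullet> u k = 1"
    "u (prev_idx n k) = cos \<theta>0 *\<^sub>R u k - sin \<theta>0 *\<^sub>R rot (\<sigma>*pi/2) (u k)"
    "u (Suc k mod n) = cos \<theta>0 *\<^sub>R u k + sin \<theta>0 *\<^sub>R rot (\<sigma>*pi/2) (u k)"
    "vertex_normal \<sigma> p n k = rot (\<sigma>*pi/2) (u k) + tan (\<theta>0/2) *\<^sub>R u k"
    "vertex_normal \<sigma> p n (Suc k mod n) = rot (\<sigma>*pi/2) (u k) - tan (\<theta>0/2) *\<^sub>R u k"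
proof -
  let ?R = "rot (\<sigma>*pi/2)"
  let ?C = "cos \<theta>0" and ?S = "sin \<theta>0"
  have n0: "0 < n" using k by simp
  have "edge_len p n 0 \<noteq> 0" using cc n0 unfolding closed_curve_def by blast
  hence l0: "l0 \<noteq> 0" using el n0 by simp
  have unit: "u j \<bullet> u j = 1" if "j < n" for j
  proof -
    have "norm (p (Suc j mod n) - p j) = l0" using el that unfolding edge_len_def by simp
    moreover have "l0 > 0" using calculation l0 norm_ge_zero[of "p (Suc j mod n) - p j"] by linarith
    ultimately have "norm (u j) = 1" unfolding u_def using l0 by simp
    thus ?thesis by (simp add: norm_eq_1)
  qed
  have en: "edge_normal \<sigma> p n j = ?R (u j)" if "j < n" for j
    unfolding edge_normal_def u_def using el that by simp
  have rel: "u (prev_idx n j) = ?C *\<^sub>R u j - ?S *\<^sub>R ?R (u j)" if j: "j < n" for j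
  proof -
    have pj: "prev_idx n j < n" using idx_facts[OF j] by simp
    let ?a = "edge_normal \<sigma> p n (prev_idx n j)" and ?b = "edge_normal \<sigma> p n (j mod n)"
    have a1: "?a \<bullet> ?a = 1" using en[OF pj] unit[OF pj] inner_RR[OF s] by simp
    have b1: "?b \<bullet> ?b = 1" using en[OF j] unit[OF j] inner_RR[OF s] j by simp
    have "-pi < signed_angle \<sigma> p n j \<and> signed_angle \<sigma> p n j \<le> pi \<and> ?b = rot (\<sigma> * signed_angle \<sigma> p n j) ?a"
      unfolding signed_angle_def by (rule theI'[OF angle_unique[OF s a1 b1]])
    hence "?b = rot (\<sigma> * \<theta>0) ?a" using sa j by simp
    hence "?a = ?C *\<^sub>R ?b - ?S *\<^sub>R ?R ?b" by (rule rot_back[OF s])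
    hence "?R (u (prev_idx n j)) = ?C *\<^sub>R ?R (u j) - ?S *\<^sub>R ?R (?R (u j))"
      using en[OF pj] en[OF j] j by simp
    hence "?R (?R (u (prev_idx n j))) = ?R (?C *\<^sub>R ?R (u j) - ?S *\<^sub>R ?R (?R (u j)))" by simp
    hence h: "- u (prev_idx n j) = - (?C *\<^sub>R u j) + ?S *\<^sub>R ?R (u j)"
      by (simp add: RR[OF s] rot_diff rot_add rot_scaleR rot_minus)
    have "u (prev_idx n j) = - (- u (prev_idx n j))" by simp
    also have "\<dots> = ?C *\<^sub>R u j - ?S *\<^sub>R ?R (u j)" unfolding h by simp
    finally show ?thesis .
  qed
  show "u k \<bullet> u k = 1" by (rule unit[OF k])
  show r1: "u (prev_idx n k) = ?C *\<^sub>R u k - ?S *\<^sub>R ?R (u k)" by (rule rel[OF k])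
  have r0: "u k = ?C *\<^sub>R u (Suc k mod n) - ?S *\<^sub>R ?R (u (Suc k mod n))"
    using rel[OF idx_facts(1)[OF k]] idx_facts(3)[OF k] by simp
  have sc: "?C * ?C + ?S * ?S = 1" using sin_cos_squared_add[of \<theta>0] by (simp add: power2_eq_square)
  show r2: "u (Suc k mod n) = ?C *\<^sub>R u k + ?S *\<^sub>R ?R (u k)"
  proof -
    let ?v = "u (Suc k mod n)"
    have "?C *\<^sub>R u k + ?S *\<^sub>R ?R (u k) = ?v"
      unfolding r0 by (simp add: rot_diff rot_scaleR rot_minus RR[OF s]; simp add: algebra_simps;
         simp only: scaleR_left_distrib[symmetric] sc scaleR_one)
    thus ?thesis by simp
  qed
  have cpos: "1 + ?C > 0" using cos_gt_neg1[of \<theta>0] th by simp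
  have tau: "tan (\<theta>0/2) = ?S / (1 + ?C)" by (rule tan_half')
  show "vertex_normal \<sigma> p n k = ?R (u k) + tan (\<theta>0/2) *\<^sub>R u k"
  proof -
    have "vertex_normal \<sigma> p n k = (1 / (1 + ?C)) *\<^sub>R (?R (u k) + ?R (u (prev_idx n k)))"
      unfolding vertex_normal_def using sa k en[OF k] en[OF idx_facts(2)[OF k]] by simp
    also have "\<dots> = (1 / (1 + ?C)) *\<^sub>R ((1 + ?C) *\<^sub>R ?R (u k) + ?S *\<^sub>R u k)"
      unfolding r1 by (simp add: rot_diff rot_scaleR rot_minus RR[OF s]; simp add: algebra_simps)
    also have "\<dots> = ?R (u k) + tan (\<theta>0/2) *\<^sub>R u k"
      using cpos unfolding tau by (simp add: scaleR_add_right)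
    finally show ?thesis .
  qed
  show "vertex_normal \<sigma> p n (Suc k mod n) = ?R (u k) - tan (\<theta>0/2) *\<^sub>R u k"
  proof -
    have k1: "Suc k mod n < n" using k by simp
    have "vertex_normal \<sigma> p n (Suc k mod n) = (1 / (1 + ?C)) *\<^sub>R (?R (u (Suc k mod n)) + ?R (u k))"
      unfolding vertex_normal_def using sa k1 en[OF k1] en[OF k] idx_facts(3)[OF k] by simp
    also have "\<dots> = (1 / (1 + ?C)) *\<^sub>R ((1 + ?C) *\<^sub>R ?R (u k) - ?S *\<^sub>R u k)"
      unfolding r2 by (simp add: rot_add rot_scaleR rot_minus RR[OF s]; simp add: algebra_simps)
    also have "\<dots> = ?R (u k) - tan (\<theta>0/2) *\<^sub>R u k"
      using cpos unfolding tau by (simp add: scaleR_diff_right)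
    finally show ?thesis .
  qed
qed



lemma deriv_part:
  fixes P :: "real \<Rightarrow> nat \<Rightarrow> real^2" and D1 D2 :: "nat \<Rightarrow> real \<Rightarrow> real^2"
  assumes s: "\<sigma> = 1 \<or> \<sigma> = -1" and ep: "\<epsilon> > 0"
    and cc: "\<forall>t\<in>{-\<epsilon><..<\<epsilon>}. closed_curve n (P t)"
    and d1a: "\<forall>k<n. \<forall>t\<in>{-\<epsilon><..<\<epsilon>}. ((\<lambda>s. P s k) has_vector_derivative D1 k t) (at t)"
    and d2a: "\<forall>k<n. \<forall>t\<in>{-\<epsilon><..<\<epsilon>}. (D1 k has_vector_derivative D2 k t) (at t)"
    and vc: "\<forall>t\<in>{-\<epsilon><..<\<epsilon>}. curve_vol \<sigma> n (P t) = c"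
  defines "E \<equiv> \<lambda>k t. P t (Suc k mod n) - P t k"
    and "E1 \<equiv> \<lambda>k t. D1 (Suc k mod n) t - D1 k t"
    and "E2 \<equiv> \<lambda>k t. D2 (Suc k mod n) t - D2 k t"
  shows "deriv (deriv (\<lambda>t. curve_length n (P t))) 0 =
     (\<Sum>k<n. ((E1 k 0 \<bullet> E1 k 0 + E k 0 \<bullet> E2 k 0) * norm (E k 0) - E k 0 \<bullet> E1 k 0 * (E k 0 \<bullet> E1 k 0 / norm (E k 0)))
              / (norm (E k 0) * norm (E k 0)))"
    and "(\<Sum>k<n. D2 k 0 \<bullet> rot (\<sigma>*pi/2) (E k 0) + D1 k 0 \<bullet> rot (\<sigma>*pi/2) (E1 k 0)
            + (D1 k 0 \<bullet> rot (\<sigma>*pi/2) (E1 k 0) + P 0 k \<bullet> rot (\<sigma>*pi/2) (E2 k 0))) = 0"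
proof -
  let ?I = "{-\<epsilon><..<\<epsilon>}"
  have d1: "\<And>k t. k < n \<Longrightarrow> t \<in> ?I \<Longrightarrow> ((\<lambda>s. P s k) has_vector_derivative D1 k t) (at t)" using d1a by blast
  have d2: "\<And>k t. k < n \<Longrightarrow> t \<in> ?I \<Longrightarrow> (D1 k has_vector_derivative D2 k t) (at t)" using d2a by blast
  let ?R = "rot (\<sigma>*pi/2)"
  have oI: "open ?I" by simp
  have I0: "0 \<in> ?I" using ep by simp
  have vdE: "(E k has_vector_derivative E1 k t) (at t)" if "k < n" "t \<in> ?I" for k t
    unfolding E_def E1_def using d1[OF that] d1[OF _ that(2), of "Suc k mod n"] that(1)
    by (intro has_vector_derivative_diff) auto
  have vdE1: "(E1 k has_vector_derivative E2 k t) (at t)" if "k < n" "t \<in> ?I" for k t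
    unfolding E1_def E2_def using d2[OF that] d2[OF _ that(2), of "Suc k mod n"] that(1)
    by (intro has_vector_derivative_diff) auto
  have Enz: "E k t \<noteq> 0" if "k < n" "t \<in> ?I" for k t
  proof -
    have "edge_len (P t) n k \<noteq> 0" using cc that unfolding closed_curve_def by blast
    thus ?thesis unfolding edge_len_def E_def using that by simp
  qed
  define LS where "LS = (\<lambda>t. \<Sum>k<n. norm (E k t))"
  define L1 where "L1 = (\<lambda>t. \<Sum>k<n. (E k t \<bullet> E1 k t) / norm (E k t))"
  have eqL: "curve_length n (P t) = LS t" for t
    unfolding curve_length_def LS_def edge_len_def E_def by (rule sum.cong) auto
  have dL: "(LS has_real_derivative L1 t) (at t)" if "t \<in> ?I" for t
    unfolding LS_def L1_def
    using that by (intro DERIV_sum vd_norm vdE Enz) auto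
  have dL1: "(L1 has_real_derivative (\<Sum>k<n. ((E1 k 0 \<bullet> E1 k 0 + E k 0 \<bullet> E2 k 0) * norm (E k 0) - E k 0 \<bullet> E1 k 0 * (E k 0 \<bullet> E1 k 0 / norm (E k 0)))
              / (norm (E k 0) * norm (E k 0)))) (at 0)"
    unfolding L1_def
  proof (rule DERIV_sum)
    fix k assume k: "k \<in> {..<n}"
    have a: "((\<lambda>t. E k t \<bullet> E1 k t) has_real_derivative (E1 k 0 \<bullet> E1 k 0 + E k 0 \<bullet> E2 k 0)) (at 0)"
      using vd_inner[OF vdE[OF _ I0] vdE1[OF _ I0], of k] k by simp
    have b: "((\<lambda>t. norm (E k t)) has_real_derivative (E k 0 \<bullet> E1 k 0) / norm (E k 0)) (at 0)"
      using vd_norm[OF vdE[OF _ I0] Enz[OF _ I0], of k] k by simp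
    show "((\<lambda>t. E k t \<bullet> E1 k t / norm (E k t)) has_real_derivative ((E1 k 0 \<bullet> E1 k 0 + E k 0 \<bullet> E2 k 0) * norm (E k 0) - E k 0 \<bullet> E1 k 0 * (E k 0 \<bullet> E1 k 0 / norm (E k 0)))
              / (norm (E k 0) * norm (E k 0))) (at 0)"
      using DERIV_divide[OF a b] Enz[OF _ I0, of k] k by simp
  qed
  have ev: "eventually (\<lambda>t. t \<in> ?I) (nhds x)" if "x \<in> ?I" for x
    by (rule eventually_nhds_in_open[OF oI that])
  have dd: "deriv (\<lambda>t. curve_length n (P t)) t = L1 t" if "t \<in> ?I" for t
  proof -
    have "deriv (\<lambda>t. curve_length n (P t)) t = deriv LS t"
      by (rule deriv_cong_ev) (simp_all add: eqL)
    also have "\<dots> = L1 t" by (rule DERIV_imp_deriv[OF dL[OF that]])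
    finally show ?thesis .
  qed
  have "deriv (deriv (\<lambda>t. curve_length n (P t))) 0 = deriv L1 0"
    by (rule deriv_cong_ev[OF eventually_mono[OF ev[OF I0]]]) (auto simp: dd)
  also have "\<dots> = (\<Sum>k<n. ((E1 k 0 \<bullet> E1 k 0 + E k 0 \<bullet> E2 k 0) * norm (E k 0) - E k 0 \<bullet> E1 k 0 * (E k 0 \<bullet> E1 k 0 / norm (E k 0)))
              / (norm (E k 0) * norm (E k 0)))" by (rule DERIV_imp_deriv[OF dL1])
  finally show "deriv (deriv (\<lambda>t. curve_length n (P t))) 0 =
     (\<Sum>k<n. ((E1 k 0 \<bullet> E1 k 0 + E k 0 \<bullet> E2 k 0) * norm (E k 0) - E k 0 \<bullet> E1 k 0 * (E k 0 \<bullet> E1 k 0 / norm (E k 0)))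
              / (norm (E k 0) * norm (E k 0)))" .
  define VS where "VS = (\<lambda>t. (1/2) * (\<Sum>k<n. P t k \<bullet> ?R (E k t)))"
  define V1 where "V1 = (\<lambda>t. (1/2) * (\<Sum>k<n. D1 k t \<bullet> ?R (E k t) + P t k \<bullet> ?R (E1 k t)))"
  have eqV: "curve_vol \<sigma> n (P t) = VS t" if "t \<in> ?I" for t
    unfolding curve_vol_def VS_def
  proof (rule arg_cong[where f="\<lambda>x. (1/2) * x"], rule sum.cong[OF refl])
    fix k assume k: "k \<in> {..<n}"
    have l: "edge_len (P t) n k \<noteq> 0" using cc that k unfolding closed_curve_def by blast
    have "edge_len (P t) n k = norm (E k t)" unfolding edge_len_def E_def using k by simp
    then show "P t k \<bullet> edge_normal \<sigma> (P t) n k * edge_len (P t) n k = P t k \<bullet> ?R (E k t)"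
      unfolding edge_normal_def using l k by (simp add: rot_scaleR E_def)
  qed
  have dV: "(VS has_real_derivative V1 t) (at t)" if "t \<in> ?I" for t
    unfolding VS_def V1_def
    using that by (intro DERIV_cmult DERIV_sum vd_inner d1 vd_rot vdE) auto
  have V10: "V1 t = 0" if "t \<in> ?I" for t
  proof -
    have "((\<lambda>_. c) has_real_derivative V1 t) (at t)"
      by (rule has_field_derivative_transform_within_open[OF dV[OF that] oI that]) (use vc eqV in auto)
    moreover have "((\<lambda>_. c) has_real_derivative 0) (at t)" by simp
    ultimately show ?thesis by (rule DERIV_unique)
  qed
  have dV1: "(V1 has_real_derivative (1/2) * (\<Sum>k<n. D2 k 0 \<bullet> ?R (E k 0) + D1 k 0 \<bullet> ?R (E1 k 0)
            + (D1 k 0 \<bullet> ?R (E1 k 0) + P 0 k \<bullet> ?R (E2 k 0)))) (at 0)"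
    unfolding V1_def
    by (intro DERIV_cmult DERIV_sum DERIV_add vd_inner d1 d2 vd_rot vdE vdE1) (auto simp: ep)
  have "((\<lambda>_. 0) has_real_derivative (1/2) * (\<Sum>k<n. D2 k 0 \<bullet> ?R (E k 0) + D1 k 0 \<bullet> ?R (E1 k 0)
            + (D1 k 0 \<bullet> ?R (E1 k 0) + P 0 k \<bullet> ?R (E2 k 0)))) (at 0)"
    by (rule has_field_derivative_transform_within_open[OF dV1 oI I0]) (simp add: V10)
  moreover have "((\<lambda>_. 0::real) has_real_derivative 0) (at 0)" by simp
  ultimately have "(1/2) * (\<Sum>k<n. D2 k 0 \<bullet> ?R (E k 0) + D1 k 0 \<bullet> ?R (E1 k 0)
            + (D1 k 0 \<bullet> ?R (E1 k 0) + P 0 k \<bullet> ?R (E2 k 0))) = 0" by (rule DERIV_unique)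
  thus "(\<Sum>k<n. D2 k 0 \<bullet> ?R (E k 0) + D1 k 0 \<bullet> ?R (E1 k 0)
            + (D1 k 0 \<bullet> ?R (E1 k 0) + P 0 k \<bullet> ?R (E2 k 0))) = 0" by simp
qed



lemma perk:
  fixes u v v' :: "real^2"
  assumes s: "\<sigma> = 1 \<or> \<sigma> = -1" and uu: "u \<bullet> u = 1" and l0: "l0 \<noteq> 0"
    and v: "v = \<psi> *\<^sub>R (rot (\<sigma>*pi/2) u + \<tau> *\<^sub>R u) + \<eta> *\<^sub>R (u - \<tau> *\<^sub>R rot (\<sigma>*pi/2) u)"
    and v': "v' = \<psi>' *\<^sub>R (rot (\<sigma>*pi/2) u - \<tau> *\<^sub>R u) + \<eta>' *\<^sub>R (u + \<tau> *\<^sub>R rot (\<sigma>*pi/2) u)"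
  shows "((v'-v)\<bullet>(v'-v))/l0 - ((l0 *\<^sub>R u)\<bullet>(v'-v))^2/l0^3 + (2*\<tau>/l0) * (v \<bullet> rot (\<sigma>*pi/2) (v'-v)) =
    (((\<psi>'-\<psi>)/l0)^2 - (2*\<tau>/l0)^2*\<psi>*\<psi>' + \<tau>^2*((2*\<tau>/l0)*((\<psi>'-\<psi>)/l0)*(\<eta>'+\<eta>) + ((\<eta>'-\<eta>)/l0)^2))*l0
     + (2*\<tau>*(1-\<tau>^2)/l0)*(\<psi>'*\<eta>' - \<psi>*\<eta>)"
proof -
  define r where "r = rot (\<sigma>*pi/2) u"
  define A where "A = \<psi>*\<tau>+\<eta>"
  define B where "B = \<psi> - \<tau>*\<eta>"
  define A' where "A' = -\<psi>'*\<tau>+\<eta>'"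
  define B' where "B' = \<psi>' + \<tau>*\<eta>'"
  have ur: "u \<bullet> r = 0" "r \<bullet> u = 0" "r \<bullet> r = 1" using inner_R_self[OF s] inner_RR[OF s] uu unfolding r_def by auto
  have Rr: "rot (\<sigma>*pi/2) r = - u" unfolding r_def by (rule RR[OF s])
  have v2: "v = A *\<^sub>R u + B *\<^sub>R r" unfolding v A_def B_def r_def by (simp add: algebra_simps)
  have v2': "v' = A' *\<^sub>R u + B' *\<^sub>R r" unfolding v' A'_def B'_def r_def by (simp add: algebra_simps)
  have w: "v' - v = (A'-A) *\<^sub>R u + (B'-B) *\<^sub>R r" unfolding v2 v2' by (simp add: algebra_simps)
  have Rw: "rot (\<sigma>*pi/2) (v' - v) = (A'-A) *\<^sub>R r - (B'-B) *\<^sub>R u"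
    unfolding w by (simp add: rot_add rot_scaleR Rr r_def[symmetric])
  have ww: "(v'-v)\<bullet>(v'-v) = (A'-A)^2 + (B'-B)^2"
    unfolding w by (simp add: inner_add_left inner_add_right ur uu power2_eq_square)
  have ew: "(l0 *\<^sub>R u)\<bullet>(v'-v) = l0 * (A'-A)"
    unfolding w by (simp add: inner_add_left inner_add_right ur uu)
  have vR: "v \<bullet> rot (\<sigma>*pi/2) (v' - v) = - A * (B'-B) + B * (A'-A)"
  proof -
    have "v \<bullet> ((A'-A) *\<^sub>R r - (B'-B) *\<^sub>R u) = - A * (B'-B) + B * (A'-A)"
      unfolding v2 by (simp add: inner_add_left inner_add_right inner_diff_right ur uu algebra_simps)
    thus ?thesis using Rw by simp
  qed
  show ?thesis unfolding ww ew vR A_def B_def A'_def B'_def using l0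
    by (simp add: field_simps power2_eq_square power3_eq_cube; algebra)
qed



lemma cyc_sum: assumes "0 < n" shows "(\<Sum>k<n. f (Suc k mod n)) = (\<Sum>k<n. (f k :: real))"
  by (rule sum.reindex_bij_witness[of _ "prev_idx n" "\<lambda>k. Suc k mod n"]) (auto simp: idx_facts)

lemma cyc_sum_prev: assumes "0 < n" shows "(\<Sum>k<n. f (prev_idx n k)) = (\<Sum>k<n. (f k :: real))"
  by (rule sum.reindex_bij_witness[of _ "\<lambda>k. Suc k mod n" "prev_idx n"]) (auto simp: idx_facts)

lemma stepA_gen: "(l0::real) \<noteq> 0 \<Longrightarrow> ((x + y)*l0 - z*(z/l0))/(l0*l0) = (x/l0 - z^2/l0^3) + y/l0"
  by (simp add: field_simps power2_eq_square power3_eq_cube)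

lemma algebra_part:
  fixes p v a u :: "nat \<Rightarrow> real^2" and \<psi> \<eta> :: "nat \<Rightarrow> real"
  assumes s: "\<sigma> = 1 \<or> \<sigma> = -1" and n0: "0 < n" and l0: "l0 > 0"
    and tau: "\<tau> * (1 + C) = S" and sc: "C*C + S*S = 1" and cnz: "1 + C \<noteq> 0"
    and u_def: "u = (\<lambda>j. (1/l0) *\<^sub>R (p (Suc j mod n) - p j))"
    and g1: "\<forall>k<n. u k \<bullet> u k = 1"
    and g2: "\<forall>k<n. u (prev_idx n k) = C *\<^sub>R u k - S *\<^sub>R rot (\<sigma>*pi/2) (u k)"
    and vv: "\<forall>k<n. v k = \<psi> k *\<^sub>R (rot (\<sigma>*pi/2) (u k) + \<tau> *\<^sub>R u k) + \<eta> k *\<^sub>R (u k - \<tau> *\<^sub>R rot (\<sigma>*pi/2) (u k))"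
    and vv': "\<forall>k<n. v (Suc k mod n) = \<psi> (Suc k mod n) *\<^sub>R (rot (\<sigma>*pi/2) (u k) - \<tau> *\<^sub>R u k)
                      + \<eta> (Suc k mod n) *\<^sub>R (u k + \<tau> *\<^sub>R rot (\<sigma>*pi/2) (u k))"
    and vol: "(\<Sum>k<n. a k \<bullet> rot (\<sigma>*pi/2) (p (Suc k mod n) - p k) + v k \<bullet> rot (\<sigma>*pi/2) (v (Suc k mod n) - v k)
            + (v k \<bullet> rot (\<sigma>*pi/2) (v (Suc k mod n) - v k) + p k \<bullet> rot (\<sigma>*pi/2) (a (Suc k mod n) - a k))) = 0"
  shows "(\<Sum>k<n. (((v (Suc k mod n) - v k) \<bullet> (v (Suc k mod n) - v k) + (p (Suc k mod n) - p k) \<bullet> (a (Suc k mod n) - a k))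
             * norm (p (Suc k mod n) - p k) - (p (Suc k mod n) - p k) \<bullet> (v (Suc k mod n) - v k)
             * ((p (Suc k mod n) - p k) \<bullet> (v (Suc k mod n) - v k) / norm (p (Suc k mod n) - p k)))
             / (norm (p (Suc k mod n) - p k) * norm (p (Suc k mod n) - p k)))
        = (\<Sum>k<n. (((\<psi> (Suc k mod n) - \<psi> k)/l0)^2 - (2*\<tau>/l0)^2 * \<psi> k * \<psi> (Suc k mod n)
              + \<tau>^2 * ((2*\<tau>/l0) * ((\<psi> (Suc k mod n) - \<psi> k)/l0) * (\<eta> (Suc k mod n) + \<eta> k)
                 + ((\<eta> (Suc k mod n) - \<eta> k)/l0)^2)) * l0)"
proof -
  let ?R = "rot (\<sigma>*pi/2)"
  define e where "e = (\<lambda>k. p (Suc k mod n) - p k)"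
  define w where "w = (\<lambda>k. v (Suc k mod n) - v k)"
  define b where "b = (\<lambda>k. a (Suc k mod n) - a k)"
  define F where "F = (\<lambda>k. (((\<psi> (Suc k mod n) - \<psi> k)/l0)^2 - (2*\<tau>/l0)^2 * \<psi> k * \<psi> (Suc k mod n)
              + \<tau>^2 * ((2*\<tau>/l0) * ((\<psi> (Suc k mod n) - \<psi> k)/l0) * (\<eta> (Suc k mod n) + \<eta> k)
                 + ((\<eta> (Suc k mod n) - \<eta> k)/l0)^2)) * l0)"
  define h where "h = (\<lambda>k. \<psi> k * \<eta> k)"
  have l0nz: "l0 \<noteq> 0" using l0 by simp
  have eu: "e k = l0 *\<^sub>R u k" for k unfolding e_def u_def using l0nz by simp
  have ne: "norm (e k) = l0" if "k < n" for k
  proof -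
    have "norm (u k) = 1" using g1 that by (simp add: norm_eq_1)
    thus ?thesis unfolding eu using l0 by simp
  qed
  have stepA: "((w k \<bullet> w k + e k \<bullet> b k) * norm (e k) - e k \<bullet> w k * (e k \<bullet> w k / norm (e k))) / (norm (e k) * norm (e k))
     = ((w k \<bullet> w k)/l0 - (e k \<bullet> w k)^2/l0^3) + (e k \<bullet> b k)/l0" if "k < n" for k
    unfolding ne[OF that] by (rule stepA_gen[OF l0nz])
  have B1: "(\<Sum>k<n. e k \<bullet> b k) = (\<Sum>k<n. a k \<bullet> (e (prev_idx n k) - e k))"
  proof -
    have "(\<Sum>k<n. e k \<bullet> a (Suc k mod n)) = (\<Sum>k<n. e (prev_idx n (Suc k mod n)) \<bullet> a (Suc k mod n))"
      by (rule sum.cong) (auto simp: idx_facts)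
    also have "\<dots> = (\<Sum>k<n. e (prev_idx n k) \<bullet> a k)" by (rule cyc_sum[OF n0])
    finally have "(\<Sum>k<n. e k \<bullet> a (Suc k mod n)) = (\<Sum>k<n. e (prev_idx n k) \<bullet> a k)" .
    thus ?thesis unfolding b_def by (simp add: inner_diff_right inner_diff_left sum_subtractf inner_commute)
  qed
  have B2: "(\<Sum>k<n. p k \<bullet> ?R (b k)) = (\<Sum>k<n. a k \<bullet> ?R (e (prev_idx n k)))"
  proof -
    have "(\<Sum>k<n. p k \<bullet> ?R (a (Suc k mod n))) = (\<Sum>k<n. p (prev_idx n (Suc k mod n)) \<bullet> ?R (a (Suc k mod n)))"
      by (rule sum.cong) (auto simp: idx_facts)
    also have "\<dots> = (\<Sum>k<n. p (prev_idx n k) \<bullet> ?R (a k))" by (rule cyc_sum[OF n0])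
    finally have 1: "(\<Sum>k<n. p k \<bullet> ?R (a (Suc k mod n))) = (\<Sum>k<n. p (prev_idx n k) \<bullet> ?R (a k))" .
    have 2: "a k \<bullet> ?R (e (prev_idx n k)) = p (prev_idx n k) \<bullet> ?R (a k) - p k \<bullet> ?R (a k)" if "k < n" for k
    proof -
      have "e (prev_idx n k) = p k - p (prev_idx n k)" unfolding e_def using idx_facts(4)[OF that] by simp
      moreover have "a k \<bullet> ?R (p k) = - (p k \<bullet> ?R (a k))" "a k \<bullet> ?R (p (prev_idx n k)) = - (p (prev_idx n k) \<bullet> ?R (a k))"
        using inner_R_swap[OF s, of "a k"] by (simp_all add: inner_commute)
      ultimately show ?thesis by (simp add: rot_diff inner_diff_right)
    qed
    show ?thesis unfolding b_def using 1 2 by (simp add: rot_diff inner_diff_right sum_subtractf)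
  qed
  have tS: "\<tau> * S = 1 - C"
  proof -
    have "(\<tau> * S) * (1 + C) = S * (\<tau> * (1 + C))" by (simp only: mult_ac)
    also have "\<dots> = S * S" by (simp only: tau)
    also have "\<dots> = (1 - C) * (1 + C)" using sc by (simp add: algebra_simps)
    finally have "(\<tau> * S) * (1 + C) = (1 - C) * (1 + C)" .
    thus ?thesis using cnz by simp
  qed
  have B3: "a k \<bullet> (e (prev_idx n k) - e k) = - \<tau> * (a k \<bullet> ?R (e k) + a k \<bullet> ?R (e (prev_idx n k)))" if "k < n" for k
  proof -
    have ep: "u (prev_idx n k) = C *\<^sub>R u k - S *\<^sub>R ?R (u k)" using g2 that by simp
    have x1: "e (prev_idx n k) - e k = (l0*(C-1)) *\<^sub>R u k - (l0*S) *\<^sub>R ?R (u k)"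
      unfolding eu ep by (simp add: algebra_simps)
    have x2: "- \<tau> *\<^sub>R ?R (e k + e (prev_idx n k)) = (- l0*(\<tau>*S)) *\<^sub>R u k - (l0*(\<tau>*(1+C))) *\<^sub>R ?R (u k)"
      unfolding eu ep by (simp add: rot_add rot_diff rot_scaleR RR[OF s] ; simp add: algebra_simps)
    have "e (prev_idx n k) - e k = - \<tau> *\<^sub>R ?R (e k + e (prev_idx n k))"
      unfolding x1 x2 tS tau by (simp add: algebra_simps)
    thus ?thesis by (simp add: rot_add inner_add_right)
  qed
  have volB: "(\<Sum>k<n. a k \<bullet> ?R (e k)) + (\<Sum>k<n. a k \<bullet> ?R (e (prev_idx n k))) + 2 * (\<Sum>k<n. v k \<bullet> ?R (w k)) = 0"
  proof -
    have "(\<Sum>k<n. a k \<bullet> ?R (e k) + v k \<bullet> ?R (w k) + (v k \<bullet> ?R (w k) + p k \<bullet> ?R (b k))) = 0"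
      using vol by (simp add: e_def w_def b_def)
    thus ?thesis using B2 by (simp add: sum.distrib sum_distrib_left algebra_simps)
  qed
  have stepB: "(\<Sum>k<n. e k \<bullet> b k) = 2 * \<tau> * (\<Sum>k<n. v k \<bullet> ?R (w k))"
  proof -
    have "(\<Sum>k<n. e k \<bullet> b k) = (\<Sum>k<n. - \<tau> * (a k \<bullet> ?R (e k) + a k \<bullet> ?R (e (prev_idx n k))))"
      unfolding B1 by (rule sum.cong) (auto simp: B3)
    also have "\<dots> = - \<tau> * ((\<Sum>k<n. a k \<bullet> ?R (e k)) + (\<Sum>k<n. a k \<bullet> ?R (e (prev_idx n k))))"
      by (simp only: sum_negf sum_distrib_left[symmetric] sum.distrib)
    finally have h1: "(\<Sum>k<n. e k \<bullet> b k) = - \<tau> * ((\<Sum>k<n. a k \<bullet> ?R (e k)) + (\<Sum>k<n. a k \<bullet> ?R (e (prev_idx n k))))" .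
    have h2: "(\<Sum>k<n. a k \<bullet> ?R (e k)) + (\<Sum>k<n. a k \<bullet> ?R (e (prev_idx n k))) = - 2 * (\<Sum>k<n. v k \<bullet> ?R (w k))"
      using volB by linarith
    show ?thesis unfolding h1 h2 by simp
  qed
  have perk': "((w k \<bullet> w k)/l0 - (e k \<bullet> w k)^2/l0^3) + (2*\<tau>/l0) * (v k \<bullet> ?R (w k))
      = F k + (2*\<tau>*(1-\<tau>^2)/l0) * (h (Suc k mod n) - h k)" if "k < n" for k
    unfolding w_def eu F_def h_def
    unfolding w_def eu F_def h_def
    by (rule perk[OF s g1[rule_format, OF that] l0nz vv[rule_format, OF that] vv'[rule_format, OF that]])
  have "(\<Sum>k<n. ((w k \<bullet> w k + e k \<bullet> b k) * norm (e k) - e k \<bullet> w k * (e k \<bullet> w k / norm (e k))) / (norm (e k) * norm (e k)))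
     = (\<Sum>k<n. ((w k \<bullet> w k)/l0 - (e k \<bullet> w k)^2/l0^3) + (e k \<bullet> b k)/l0)"
    by (rule sum.cong[OF refl], rule stepA, simp)
  also have "\<dots> = (\<Sum>k<n. ((w k \<bullet> w k)/l0 - (e k \<bullet> w k)^2/l0^3)) + (\<Sum>k<n. e k \<bullet> b k)/l0"
    by (simp add: sum.distrib sum_divide_distrib)
  also have "\<dots> = (\<Sum>k<n. ((w k \<bullet> w k)/l0 - (e k \<bullet> w k)^2/l0^3) + (2*\<tau>/l0) * (v k \<bullet> ?R (w k)))"
    unfolding stepB by (simp add: sum.distrib sum_distrib_left sum_divide_distrib)
  also have "\<dots> = (\<Sum>k<n. F k + (2*\<tau>*(1-\<tau>^2)/l0) * (h (Suc k mod n) - h k))"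
    by (rule sum.cong[OF refl], rule perk', simp)
  also have "\<dots> = (\<Sum>k<n. F k) + (2*\<tau>*(1-\<tau>^2)/l0) * ((\<Sum>k<n. h (Suc k mod n)) - (\<Sum>k<n. h k))"
    by (simp only: sum.distrib sum_distrib_left[symmetric] sum_subtractf)
  also have "\<dots> = (\<Sum>k<n. F k)" using cyc_sum[OF n0, of h] by simp
  finally show ?thesis unfolding e_def w_def b_def F_def .
qed



lemma parts_sum:
  fixes \<psi> :: "nat \<Rightarrow> real"
  assumes n0: "0 < n" and l0: "l0 \<noteq> 0"
  shows "(\<Sum>k<n. (dgrad l0 n \<psi> k)\<^sup>2 * l0) = - (\<Sum>k<n. \<psi> k * dlap l0 n \<psi> k * l0)"
proof -
  let ?g = "dgrad l0 n \<psi>"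
  have 1: "(\<Sum>k<n. \<psi> k * ?g (prev_idx n k)) = (\<Sum>k<n. \<psi> (Suc k mod n) * ?g k)"
  proof -
    have "(\<Sum>k<n. \<psi> (Suc k mod n) * ?g k) = (\<Sum>k<n. \<psi> (Suc k mod n) * ?g (prev_idx n (Suc k mod n)))"
      by (rule sum.cong) (auto simp: idx_facts)
    also have "\<dots> = (\<Sum>k<n. \<psi> k * ?g (prev_idx n k))" by (rule cyc_sum[OF n0])
    finally show ?thesis by simp
  qed
  have 2: "\<psi> k * dlap l0 n \<psi> k * l0 = \<psi> k * ?g k - \<psi> k * ?g (prev_idx n k)" for k
  proof -
    have "dlap l0 n \<psi> k * l0 = ?g k - ?g (prev_idx n k)" unfolding dlap_def using l0 by simp
    hence "\<psi> k * (dlap l0 n \<psi> k * l0) = \<psi> k * ?g k - \<psi> k * ?g (prev_idx n k)" by (simp add: right_diff_distrib)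
    thus ?thesis by (simp add: mult.assoc)
  qed
  have 3: "(dgrad l0 n \<psi> k)\<^sup>2 * l0 = \<psi> (Suc k mod n) * ?g k - \<psi> k * ?g k" if "k < n" for k
  proof -
    have "?g k * l0 = \<psi> (Suc k mod n) - \<psi> k" unfolding dgrad_def using l0 that by simp
    have "(?g k)\<^sup>2 * l0 = ?g k * (?g k * l0)" by (simp add: power2_eq_square)
    also have "\<dots> = ?g k * (\<psi> (Suc k mod n) - \<psi> k)" unfolding \<open>?g k * l0 = _\<close> ..
    finally show ?thesis by (simp add: algebra_simps)
  qed
  have "(\<Sum>k<n. (dgrad l0 n \<psi> k)\<^sup>2 * l0) = (\<Sum>k<n. \<psi> (Suc k mod n) * ?g k - \<psi> k * ?g k)"
    by (rule sum.cong[OF refl], rule 3, simp)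
  also have "\<dots> = (\<Sum>k<n. \<psi> k * ?g (prev_idx n k)) - (\<Sum>k<n. \<psi> k * ?g k)" unfolding 1 sum_subtractf ..
  also have "\<dots> = - (\<Sum>k<n. \<psi> k * dlap l0 n \<psi> k * l0)" unfolding 2 sum_subtractf by simp
  finally show ?thesis .
qed



theorem mainTheorem15:
  fixes p :: "nat \<Rightarrow> real^2" and P :: "real \<Rightarrow> nat \<Rightarrow> real^2"
    and n :: nat and \<sigma> \<theta>0 l0 \<kappa> \<epsilon> :: real and \<psi> \<eta> :: "nat \<Rightarrow> real"
  assumes "\<sigma> = 1 \<or> \<sigma> = -1"
    and "closed_curve n p"
    and "\<forall>k<n. edge_len p n k = l0"
    and "\<forall>k<n. signed_angle \<sigma> p n k = \<theta>0"
    and "-pi < \<theta>0" and "\<theta>0 < pi"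
    and "\<kappa> = 2 * tan (\<theta>0 / 2) / l0"
    and "\<epsilon> > 0"
    and "\<forall>t\<in>{-\<epsilon><..<\<epsilon>}. closed_curve n (P t)"
    and "C2_family \<epsilon> n P"
    and "\<forall>k<n. P 0 k = p k"
    and "\<forall>t\<in>{-\<epsilon><..<\<epsilon>}. curve_vol \<sigma> n (P t) = curve_vol \<sigma> n p"
    and "\<forall>k<n. vector_derivative (\<lambda>t. P t k) (at 0) =
            \<psi> k *\<^sub>R vertex_normal \<sigma> p n k + \<eta> k *\<^sub>R vertex_tangent \<sigma> p n k"
  shows "deriv (deriv (\<lambda>t. curve_length n (P t))) 0 =
           (\<Sum>k<n. ((dgrad l0 n \<psi> k)\<^sup>2 - \<kappa>\<^sup>2 * \<psi> k * \<psi> (Suc k mod n)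
              + (tan (\<theta>0 / 2))\<^sup>2 * (\<kappa> * dgrad l0 n \<psi> k * (\<eta> (Suc k mod n) + \<eta> k)
                                     + (dgrad l0 n \<eta> k)\<^sup>2)) * l0)
       \<and> ((\<forall>k<n. \<eta> k = 0) \<longrightarrow>
           deriv (deriv (\<lambda>t. curve_length n (P t))) 0 =
             (\<Sum>k<n. ((dgrad l0 n \<psi> k)\<^sup>2 - \<kappa>\<^sup>2 * \<psi> k * \<psi> (Suc k mod n)) * l0)
           \<and> (\<Sum>k<n. ((dgrad l0 n \<psi> k)\<^sup>2 - \<kappa>\<^sup>2 * \<psi> k * \<psi> (Suc k mod n)) * l0) =
             - (\<Sum>k<n. \<psi> k * (dlap l0 n \<psi> k + \<kappa>\<^sup>2 * \<psi> (Suc k mod n)) * l0))"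
proof -
  note s = assms(1)
  let ?I = "{-\<epsilon><..<\<epsilon>}"
  let ?R = "rot (\<sigma>*pi/2)"
  let ?C = "cos \<theta>0" and ?S = "sin \<theta>0"
  define \<tau> where "\<tau> = tan (\<theta>0/2)"
  have n0: "0 < n" using assms(2) unfolding closed_curve_def by simp
  have "edge_len p n 0 \<noteq> 0" using assms(2) n0 unfolding closed_curve_def by blast
  hence l0nz: "l0 \<noteq> 0" using assms(3) n0 by simp
  have "edge_len p n 0 \<ge> 0" unfolding edge_len_def by simp
  hence l0: "l0 > 0" using l0nz assms(3) n0 by simp
  have "\<forall>k\<in>{..<n}. \<exists>D1 D2. \<forall>t\<in>?I. ((\<lambda>s. P s k) has_vector_derivative D1 t) (at t) \<and>
      (D1 has_vector_derivative D2 t) (at t) \<and> continuous_on ?I D2"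
    using assms(10) unfolding C2_family_def by simp
  then obtain D1 where "\<forall>k\<in>{..<n}. \<exists>D2. \<forall>t\<in>?I. ((\<lambda>s. P s k) has_vector_derivative D1 k t) (at t) \<and>
      (D1 k has_vector_derivative D2 t) (at t) \<and> continuous_on ?I D2"
    by (rule bchoice[THEN exE]) blast
  then obtain D2 where D: "\<forall>k\<in>{..<n}. \<forall>t\<in>?I. ((\<lambda>s. P s k) has_vector_derivative D1 k t) (at t) \<and>
      (D1 k has_vector_derivative D2 k t) (at t) \<and> continuous_on ?I (D2 k)"
    by (rule bchoice[THEN exE]) blast
  have d1: "\<And>k t. k < n \<Longrightarrow> t \<in> ?I \<Longrightarrow> ((\<lambda>s. P s k) has_vector_derivative D1 k t) (at t)"
    using D by blast
  have d2: "\<And>k t. k < n \<Longrightarrow> t \<in> ?I \<Longrightarrow> (D1 k has_vector_derivative D2 k t) (at t)"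
    using D by blast
  have d1a: "\<forall>k<n. \<forall>t\<in>?I. ((\<lambda>s. P s k) has_vector_derivative D1 k t) (at t)" using D by blast
  have d2a: "\<forall>k<n. \<forall>t\<in>?I. (D1 k has_vector_derivative D2 k t) (at t)" using D by blast
  note DP = deriv_part[OF s assms(8) assms(9) d1a d2a assms(12)]
  have I0: "0 \<in> ?I" using assms(8) by simp
  have P0: "P 0 k = p k" "P 0 (Suc k mod n) = p (Suc k mod n)" if "k < n" for k
    using assms(11) that by auto
  have vd: "D1 k 0 = \<psi> k *\<^sub>R vertex_normal \<sigma> p n k + \<eta> k *\<^sub>R vertex_tangent \<sigma> p n k" if "k < n" for k
    using vector_derivative_at[OF d1[OF that I0]] assms(13) that by simp
  define u where "u = (\<lambda>j. (1/l0) *\<^sub>R (p (Suc j mod n) - p j))"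
  note G = polygon_geom[OF s assms(2) assms(3) assms(4) assms(5) assms(6) _ u_def]
  have cpos: "1 + ?C > 0" using cos_gt_neg1[of \<theta>0] assms(5,6) by simp
  have tau: "\<tau> * (1 + ?C) = ?S" unfolding \<tau>_def tan_half' using cpos by simp
  have sc: "?C * ?C + ?S * ?S = 1" using sin_cos_squared_add[of \<theta>0] by (simp add: power2_eq_square)
  have vv: "\<forall>k<n. D1 k 0 = \<psi> k *\<^sub>R (?R (u k) + \<tau> *\<^sub>R u k) + \<eta> k *\<^sub>R (u k - \<tau> *\<^sub>R ?R (u k))"
  proof (intro allI impI)
    fix k assume k: "k < n"
    have T: "vertex_tangent \<sigma> p n k = u k - \<tau> *\<^sub>R ?R (u k)"
      unfolding vertex_tangent_def G(4)[OF k] \<tau>_def by (simp add: rot_add rot_scaleR RR[OF s])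
    show "D1 k 0 = \<psi> k *\<^sub>R (?R (u k) + \<tau> *\<^sub>R u k) + \<eta> k *\<^sub>R (u k - \<tau> *\<^sub>R ?R (u k))"
      unfolding vd[OF k] T G(4)[OF k] \<tau>_def ..
  qed
  have vv': "\<forall>k<n. D1 (Suc k mod n) 0 = \<psi> (Suc k mod n) *\<^sub>R (?R (u k) - \<tau> *\<^sub>R u k)
                      + \<eta> (Suc k mod n) *\<^sub>R (u k + \<tau> *\<^sub>R ?R (u k))"
  proof (intro allI impI)
    fix k assume k: "k < n"
    have k1: "Suc k mod n < n" using n0 by simp
    have T: "vertex_tangent \<sigma> p n (Suc k mod n) = u k + \<tau> *\<^sub>R ?R (u k)"
      unfolding vertex_tangent_def G(5)[OF k] \<tau>_def by (simp add: rot_diff rot_scaleR RR[OF s])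
    show "D1 (Suc k mod n) 0 = \<psi> (Suc k mod n) *\<^sub>R (?R (u k) - \<tau> *\<^sub>R u k)
                      + \<eta> (Suc k mod n) *\<^sub>R (u k + \<tau> *\<^sub>R ?R (u k))"
      unfolding vd[OF k1] T G(5)[OF k] \<tau>_def ..
  qed
  have vol: "(\<Sum>k<n. D2 k 0 \<bullet> ?R (p (Suc k mod n) - p k) + D1 k 0 \<bullet> ?R (D1 (Suc k mod n) 0 - D1 k 0)
            + (D1 k 0 \<bullet> ?R (D1 (Suc k mod n) 0 - D1 k 0) + p k \<bullet> ?R (D2 (Suc k mod n) 0 - D2 k 0))) = 0"
  proof -
    have "(\<Sum>k<n. D2 k 0 \<bullet> ?R (p (Suc k mod n) - p k) + D1 k 0 \<bullet> ?R (D1 (Suc k mod n) 0 - D1 k 0)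
            + (D1 k 0 \<bullet> ?R (D1 (Suc k mod n) 0 - D1 k 0) + p k \<bullet> ?R (D2 (Suc k mod n) 0 - D2 k 0)))
        = (\<Sum>k<n. D2 k 0 \<bullet> ?R (P 0 (Suc k mod n) - P 0 k) + D1 k 0 \<bullet> ?R (D1 (Suc k mod n) 0 - D1 k 0)
            + (D1 k 0 \<bullet> ?R (D1 (Suc k mod n) 0 - D1 k 0) + P 0 k \<bullet> ?R (D2 (Suc k mod n) 0 - D2 k 0)))"
      by (rule sum.cong) (auto simp: P0)
    thus ?thesis using DP(2) by simp
  qed
  note AP = algebra_part[OF s n0 l0 tau sc _ u_def _ _ vv vv' vol]
  have main: "deriv (deriv (\<lambda>t. curve_length n (P t))) 0 =
           (\<Sum>k<n. ((dgrad l0 n \<psi> k)\<^sup>2 - \<kappa>\<^sup>2 * \<psi> k * \<psi> (Suc k mod n)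
              + (tan (\<theta>0 / 2))\<^sup>2 * (\<kappa> * dgrad l0 n \<psi> k * (\<eta> (Suc k mod n) + \<eta> k)
                                     + (dgrad l0 n \<eta> k)\<^sup>2)) * l0)"
  proof -
    have "deriv (deriv (\<lambda>t. curve_length n (P t))) 0 =
       (\<Sum>k<n. (((D1 (Suc k mod n) 0 - D1 k 0) \<bullet> (D1 (Suc k mod n) 0 - D1 k 0) + (p (Suc k mod n) - p k) \<bullet> (D2 (Suc k mod n) 0 - D2 k 0))
             * norm (p (Suc k mod n) - p k) - (p (Suc k mod n) - p k) \<bullet> (D1 (Suc k mod n) 0 - D1 k 0)
             * ((p (Suc k mod n) - p k) \<bullet> (D1 (Suc k mod n) 0 - D1 k 0) / norm (p (Suc k mod n) - p k)))
             / (norm (p (Suc k mod n) - p k) * norm (p (Suc k mod n) - p k)))"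
      by (rule trans[OF DP(1)], rule sum.cong) (auto simp: P0)
    also have "\<dots> = (\<Sum>k<n. (((\<psi> (Suc k mod n) - \<psi> k)/l0)^2 - (2*\<tau>/l0)^2 * \<psi> k * \<psi> (Suc k mod n)
              + \<tau>^2 * ((2*\<tau>/l0) * ((\<psi> (Suc k mod n) - \<psi> k)/l0) * (\<eta> (Suc k mod n) + \<eta> k)
                 + ((\<eta> (Suc k mod n) - \<eta> k)/l0)^2)) * l0)"
      by (rule AP) (use cpos G in auto)
    also have "\<dots> = (\<Sum>k<n. ((dgrad l0 n \<psi> k)\<^sup>2 - \<kappa>\<^sup>2 * \<psi> k * \<psi> (Suc k mod n)
              + (tan (\<theta>0 / 2))\<^sup>2 * (\<kappa> * dgrad l0 n \<psi> k * (\<eta> (Suc k mod n) + \<eta> k)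
                                     + (dgrad l0 n \<eta> k)\<^sup>2)) * l0)"
      by (rule sum.cong) (auto simp: dgrad_def assms(7) \<tau>_def)
    finally show ?thesis .
  qed
  show ?thesis
  proof (intro conjI impI)
    show "deriv (deriv (\<lambda>t. curve_length n (P t))) 0 =
           (\<Sum>k<n. ((dgrad l0 n \<psi> k)\<^sup>2 - \<kappa>\<^sup>2 * \<psi> k * \<psi> (Suc k mod n)
              + (tan (\<theta>0 / 2))\<^sup>2 * (\<kappa> * dgrad l0 n \<psi> k * (\<eta> (Suc k mod n) + \<eta> k)
                                     + (dgrad l0 n \<eta> k)\<^sup>2)) * l0)" by (rule main)
  next
    assume e0: "\<forall>k<n. \<eta> k = 0"
    show "deriv (deriv (\<lambda>t. curve_length n (P t))) 0 =
             (\<Sum>k<n. ((dgrad l0 n \<psi> k)\<^sup>2 - \<kappa>\<^sup>2 * \<psi> k * \<psi> (Suc k mod n)) * l0)"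
      unfolding main by (rule sum.cong) (auto simp: e0 dgrad_def)
  next
    have "(\<Sum>k<n. ((dgrad l0 n \<psi> k)\<^sup>2 - \<kappa>\<^sup>2 * \<psi> k * \<psi> (Suc k mod n)) * l0)
        = (\<Sum>k<n. (dgrad l0 n \<psi> k)\<^sup>2 * l0) - (\<Sum>k<n. \<kappa>\<^sup>2 * \<psi> k * \<psi> (Suc k mod n) * l0)"
      by (simp add: left_diff_distrib sum_subtractf)
    also have "\<dots> = - (\<Sum>k<n. \<psi> k * dlap l0 n \<psi> k * l0) - (\<Sum>k<n. \<kappa>\<^sup>2 * \<psi> k * \<psi> (Suc k mod n) * l0)"
      unfolding parts_sum[OF n0 l0nz] ..
    also have "\<dots> = - (\<Sum>k<n. \<psi> k * (dlap l0 n \<psi> k + \<kappa>\<^sup>2 * \<psi> (Suc k mod n)) * l0)"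
      by (simp add: algebra_simps sum.distrib)
    finally show "(\<Sum>k<n. ((dgrad l0 n \<psi> k)\<^sup>2 - \<kappa>\<^sup>2 * \<psi> k * \<psi> (Suc k mod n)) * l0) =
             - (\<Sum>k<n. \<psi> k * (dlap l0 n \<psi> k + \<kappa>\<^sup>2 * \<psi> (Suc k mod n)) * l0)" .
  qed
qed


end
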